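(* Let $q$ be a query program, $P$ a partial model, $\mathcal{T}$ a theory, and $P',\mathcal{T}'$ the partial model and theory produced by the witness-generation construction. If $M=\langle O_M,I_M,\mathcal{S}_M\rangle\in\mathit{solutions}(P,\mathcal{T})$, then there exist a renaming of variables $\mathit{rename}:\mathcal{X}\to\mathcal{X}$ stationary with respect to $\mathcal{T}$ and a model $M'\in\mathit{solutions}(P',\mathcal{T}')$ such that $M^{\mathit{rename}}\succcurlyeq M'$ and $\mathit{DS}_M(M)=\mathit{DS}_M(M')=g_{\mathrm{witness}}(M')$, where $\mathit{DS}_M(N)=\max_{k\vDash\mathcal{S}_{\mathrm{IPET}}\cup\mathcal{S}_{\mathrm{flow}}(N)}g_{\mathrm{IPET}}(k)$ and $g_{\mathrm{witness}}(N)=\max_{k\vDash\mathcal{S}_N}g_{\mathrm{IPET}}(k)$ for concrete $N$.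
   Context: Linear systems. Fix a large finite reserve $\mathcal{X}$ of integer variables. A system of linear inequalities $\mathcal{S}$ is a finite set of inequalities $\sum_j a_{ij}x_j\le y_i$ (equations are written as pairs of inequalities). A valuation $k:\mathcal{X}\to\mathbb{Z}$ is a solution of $\mathcal{S}$ ($k\vDash\mathcal{S}$) if it satisfies all of them; $\mathcal{S}_1\vDash\mathcal{S}_2$ means every solution of $\mathcal{S}_1$ is a solution of $\mathcal{S}_2$. Models. A metamodel is a signature $\Sigma$ of unary class symbols, binary relation symbols, a unary existence symbol $\varepsilon$ and a binary equality symbol $\sim$. A (scoped) partial model $P=\langle O_P,I_P,\mathcal{S}_P\rangle$ consists of a finite object set $O_P$, a 3-valued interpretation $I_P(\sigma):O_P^{\mathrm{arity}(\sigma)}\to\{0,1,\tfrac12\}$ for each $\sigma\in\Sigma$ ($\tfrac12$ = unknown), and a scope $\mathcal{S}_P$ (a system of linear inequalities). $P$ is concrete if all values are $0$ or $1$, $I_P(\varepsilon)(o)=1$ for all $o$, $I_P(\sim)(o_1,o_2)=1$ iff $o_1=o_2$, and $\mathcal{S}_P$ has a solution. Refinement: for $\mathit{abs}:O_Q\to O_P$, $P\succcurlyeq_{\mathit{abs}}Q$ holds if for all $\sigma$ and tuples $\bar q$, $I_P(\sigma)(\mathit{abs}(\bar q))$ is $\tfrac12$ or equals $I_Q(\sigma)(\bar q)$; every $p$ with $I_P(\varepsilon)(p)=1$ has a preimage under $\mathit{abs}$; and $\mathcal{S}_Q\vDash\mathcal{S}_P$. $P\succcurlyeq Q$ if $P\succcurlyeq_{\mathit{abs}}Q$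 for some $\mathit{abs}$. For a first-order predicate $\varphi$ over $\Sigma$ with free variables $v_1,\dots,v_n$ and a concrete model $M$, $M\#\varphi$ is the number of maps $Z:\{v_1,\dots,v_n\}\to O_M$ under which $\varphi$ is true in $M$. A theory $\mathcal{T}=\langle\Phi,r\rangle$ is a finite set $\Phi$ of predicates with a map $r:\Phi\to\mathcal{X}$; a concrete $M$ is compatible with it ($M\vDash\mathcal{T}$) if $\mathcal{S}_M\vDash r(\varphi)=M\#\varphi$ for all $\varphi\in\Phi$. $\mathit{solutions}(P,\mathcal{T})$ is the set of concrete models $M$ with $P\succcurlyeq M$ and $M\vDash\mathcal{T}$. Renaming. A map $\mathit{rename}:\mathcal{X}\to\mathcal{X}$ is a renaming of variables if it is bijective; it is stationary with respect to $\mathcal{T}=\langle\Phi,r\rangle$ if $\mathit{rename}(r(\varphi))=r(\varphi)$ for all $\varphi\in\Phi$. For a partial model $P=\langle O_P,I_P,\mathcal{S}_P\rangle$, its renaming is $P^{\mathit{rename}}=\langle O_P,I_P,\mathcal{S}_P^{\mathit{rename}}\rangle$, where $\mathcal{S}_P^{\mathit{rename}}$ is obtained from $\mathcal{S}_P$ by replacing each variable $x$ with $\mathit{rename}(x)$. Program and IPET. $q$ is a query program generated from a graph-query search plan: structured code of nested for-loops and if-statements, where each for-loop implements an extend constraint ($C(v)$ with $v$ new, or $R(v_i,v_j)$ with $v_j$ new; it iterates over all candidate bindings of the new variable) and each if-statement implements a check constraint ($C(v_i)$, $R(v_i,v_j)$, $v_i=v_j$, or their negations, over bound variables). $\mathit{BB}$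 is its set of basic blocks; its weighted CFG is $\langle V,E,s,t,w,\mathit{tr}\rangle$ with edges $E\subseteq V\times V$, start/end $s,t$, weights $w:E\to\mathbb{N}$, traceability $\mathit{tr}:V\to\mathit{BB}$. $f:E\to\mathcal{X}$ assigns distinct variables to edges. $\mathcal{S}_{\mathrm{IPET}}$ contains $\sum_{e=\langle s,n\rangle}f(e)=1$, $\sum_{e=\langle n,t\rangle}f(e)=1$, flow conservation at every $n\ne s,t$, $-f(e)\le0$, and possibly further low-level flow facts. $g_{\mathrm{IPET}}(k)=\sum_{e\in E}w(e)k(f(e))$. Standing assumption (IPET safety): for every execution of $q$ along CFG path $\pi$, the valuation $k_\pi(f(e))=\pi\#e$ satisfies $\mathcal{S}_{\mathrm{IPET}}$ and the execution time is at most $g_{\mathrm{IPET}}(k_\pi)$. Basic block predicates. For $bb\in\mathit{BB}$, $\psi_{bb}$ is the conjunction of the atomic predicates of all for/if statements enclosing $bb$ (extend atoms without their existential quantifier; check literals as-is); $\psi_{bb}=\mathrm{true}$ if none. If $bb$ is the header of loop $\ell$, also $\psi'_{bb}=\psi_{bb}\wedge(\text{atom of }\ell)$. $\Psi$ is the set of all these predicates. By the structure of the generated code, in the run of $q$ on a concrete $M$, executions of a non-header $bb$ correspond one-to-one to matches of $\psi_{bb}$, and executions of a loop header $bb$ to matches of $\psi_{bb}$ plus matches of $\psi'_{bb}$. For concrete $M$, $\mathcal{S}_{\mathrm{flow}}(M)$ contains for each $bb$: $\sum_{e=\langle n_1,n_2\rangle\in E,\mathit{tr}(n_1)=bb}f(e)=M\#\psi_{bb}+M\#\psi'_{bb}$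 (loop header) or $=M\#\psi_{bb}$ (otherwise). Witness generation. Given $P=\langle O_P,I_P,\mathcal{S}_P\rangle$ and $\mathcal{T}=\langle\Phi,r\rangle$ (with the range of $f$ disjoint from the range of $r$ and from the variables of $\mathcal{S}_P$), extend $r$ to $r'$ on $\Phi\cup\Psi$ by assigning to each $\psi\in\Psi$ a fresh distinct variable (not in the range of $f$, of $r$, or in $\mathcal{S}_P$). $\mathcal{S}_{\mathrm{merge}}$ contains for each $bb$: $r'(\psi_{bb})+r'(\psi'_{bb})-\sum_{e=\langle n_1,n_2\rangle\in E,\mathit{tr}(n_1)=bb}f(e)=0$ if $bb$ is a loop header, else $r'(\psi_{bb})-\sum_{e=\langle n_1,n_2\rangle\in E,\mathit{tr}(n_1)=bb}f(e)=0$. Set $P'=\langle O_P,I_P,\mathcal{S}_P\cup\mathcal{S}_{\mathrm{IPET}}\cup\mathcal{S}_{\mathrm{merge}}\rangle$ and $\mathcal{T}'=\langle\Phi\cup\Psi,r'\rangle$. *)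

theory Defs
  imports Main "HOL-Library.FuncSet"
begin

section \<open>Linear systems over a reserve of integer variables 'x\<close>

(* An inequality  sum_j a_j x_j <= b  is a pair (a, b) with a finitely supported
   coefficient function a :: 'x => int. *)
type_synonym 'x lineq = "('x \<Rightarrow> int) \<times> int"
type_synonym 'x lsys = "'x lineq set"

definition lhs :: "('x \<Rightarrow> int) \<Rightarrow> ('x \<Rightarrow> int) \<Rightarrow> int" where
  "lhs a k = (\<Sum>x\<in>{x. a x \<noteq> 0}. a x * k x)"

definition solves :: "('x \<Rightarrow> int) \<Rightarrow> 'x lsys \<Rightarrow> bool" where
  "solves k S = (\<forall>(a, b)\<in>S. lhs a k \<le> b)"

definition entails :: "'x lsys \<Rightarrow> 'x lsys \<Rightarrow> bool" where
  "entails S1 S2 = (\<forall>k. solves k S1 \<longrightarrow> solves k S2)"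

definition wf_sys :: "'x lsys \<Rightarrow> bool" where
  "wf_sys S = (finite S \<and> (\<forall>(a, b)\<in>S. finite {x. a x \<noteq> 0}))"

definition vars_sys :: "'x lsys \<Rightarrow> 'x set" where
  "vars_sys S = (\<Union>(a, b)\<in>S. {x. a x \<noteq> 0})"

definition eqn :: "('x \<Rightarrow> int) \<Rightarrow> int \<Rightarrow> 'x lsys" where
  "eqn a c = {(a, c), (\<lambda>x. - a x, - c)}"

(* coefficient vector of  sum_{x in A} x *)
definition ind :: "'x set \<Rightarrow> 'x \<Rightarrow> int" where
  "ind A = (\<lambda>x. if x \<in> A then 1 else 0)"

section \<open>Partial models\<close>

datatype tv = Zero | One | Half   (* Half = unknown *)

record ('c, 'r, 'o, 'x) pmodel =
  objs  :: "'o set"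
  cls   :: "'c \<Rightarrow> 'o \<Rightarrow> tv"
  rel   :: "'r \<Rightarrow> 'o \<Rightarrow> 'o \<Rightarrow> tv"
  exs   :: "'o \<Rightarrow> tv"
  sim   :: "'o \<Rightarrow> 'o \<Rightarrow> tv"
  scope :: "'x lsys"

definition wf_pmodel :: "('c, 'r, 'o, 'x) pmodel \<Rightarrow> bool" where
  "wf_pmodel P = (finite (objs P) \<and> wf_sys (scope P))"

definition concrete :: "('c, 'r, 'o, 'x) pmodel \<Rightarrow> bool" where
  "concrete M = (wf_pmodel M
     \<and> (\<forall>c. \<forall>b\<in>objs M. cls M c b \<noteq> Half)
     \<and> (\<forall>r. \<forall>o1\<in>objs M. \<forall>o2\<in>objs M. rel M r o1 o2 \<noteq> Half)
     \<and> (\<forall>b\<in>objs M. exs M b = One)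
     \<and> (\<forall>o1\<in>objs M. \<forall>o2\<in>objs M. sim M o1 o2 = (if o1 = o2 then One else Zero))
     \<and> (\<exists>k. solves k (scope M)))"

definition refines_via :: "('c, 'r, 'o, 'x) pmodel \<Rightarrow> ('q \<Rightarrow> 'o) \<Rightarrow> ('c, 'r, 'q, 'x) pmodel \<Rightarrow> bool" where
  "refines_via P ab Q = (ab ` objs Q \<subseteq> objs P
     \<and> (\<forall>c. \<forall>q\<in>objs Q. cls P c (ab q) = Half \<or> cls P c (ab q) = cls Q c q)
     \<and> (\<forall>r. \<forall>q1\<in>objs Q. \<forall>q2\<in>objs Q.
           rel P r (ab q1) (ab q2) = Half \<or> rel P r (ab q1) (ab q2) = rel Q r q1 q2)
     \<and> (\<forall>q\<in>objs Q. exs P (ab q) = Half \<or> exs P (ab q) = exs Q q)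
     \<and> (\<forall>q1\<in>objs Q. \<forall>q2\<in>objs Q.
           sim P (ab q1) (ab q2) = Half \<or> sim P (ab q1) (ab q2) = sim Q q1 q2)
     \<and> (\<forall>p\<in>objs P. exs P p = One \<longrightarrow> (\<exists>q\<in>objs Q. ab q = p))
     \<and> entails (scope Q) (scope P))"

definition refines :: "('c, 'r, 'o, 'x) pmodel \<Rightarrow> ('c, 'r, 'q, 'x) pmodel \<Rightarrow> bool" where
  "refines P Q = (\<exists>ab. refines_via P ab Q)"

section \<open>First-order predicates over the metamodel and match counting\<close>

datatype ('c, 'r, 'v) fo =
    FTrue
  | FCls 'c 'v
  | FRel 'r 'v 'v
  | FExs 'v
  | FSim 'v 'v
  | FEq 'v 'v
  | FNot "('c, 'r, 'v) fo"
  | FAnd "('c, 'r, 'v) fo" "('c, 'r, 'v) fo"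
  | FEx 'v "('c, 'r, 'v) fo"

fun fvars :: "('c, 'r, 'v) fo \<Rightarrow> 'v set" where
  "fvars FTrue = {}"
| "fvars (FCls c v) = {v}"
| "fvars (FRel r v w) = {v, w}"
| "fvars (FExs v) = {v}"
| "fvars (FSim v w) = {v, w}"
| "fvars (FEq v w) = {v, w}"
| "fvars (FNot \<phi>) = fvars \<phi>"
| "fvars (FAnd \<phi> \<psi>) = fvars \<phi> \<union> fvars \<psi>"
| "fvars (FEx v \<phi>) = fvars \<phi> - {v}"

fun holds :: "('c, 'r, 'o, 'x) pmodel \<Rightarrow> ('v \<Rightarrow> 'o) \<Rightarrow> ('c, 'r, 'v) fo \<Rightarrow> bool" where
  "holds M Z FTrue = True"
| "holds M Z (FCls c v) = (cls M c (Z v) = One)"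
| "holds M Z (FRel r v w) = (rel M r (Z v) (Z w) = One)"
| "holds M Z (FExs v) = (exs M (Z v) = One)"
| "holds M Z (FSim v w) = (sim M (Z v) (Z w) = One)"
| "holds M Z (FEq v w) = (Z v = Z w)"
| "holds M Z (FNot \<phi>) = (\<not> holds M Z \<phi>)"
| "holds M Z (FAnd \<phi> \<psi>) = (holds M Z \<phi> \<and> holds M Z \<psi>)"
| "holds M Z (FEx v \<phi>) = (\<exists>b\<in>objs M. holds M (Z(v := b)) \<phi>)"

definition match_count :: "('c, 'r, 'o, 'x) pmodel \<Rightarrow> ('c, 'r, 'v) fo \<Rightarrow> nat" where
  "match_count M \<phi> = card {Z \<in> fvars \<phi> \<rightarrow>\<^sub>E objs M. holds M Z \<phi>}"

section \<open>Theories, solutions, renaming\<close>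

type_synonym ('c, 'r, 'v, 'x) fotheory = "('c, 'r, 'v) fo set \<times> (('c, 'r, 'v) fo \<Rightarrow> 'x)"

definition compatible :: "('c, 'r, 'o, 'x) pmodel \<Rightarrow> ('c, 'r, 'v, 'x) fotheory \<Rightarrow> bool" where
  "compatible M T = (\<forall>\<phi>\<in>fst T. entails (scope M) (eqn (ind {snd T \<phi>}) (int (match_count M \<phi>))))"

definition solutions :: "('c, 'r, 'o, 'x) pmodel \<Rightarrow> ('c, 'r, 'v, 'x) fotheory \<Rightarrow> ('c, 'r, 'm, 'x) pmodel set" where
  "solutions P T = {M. concrete M \<and> refines P M \<and> compatible M T}"

definition stationary :: "('x \<Rightarrow> 'x) \<Rightarrow> ('c, 'r, 'v, 'x) fotheory \<Rightarrow> bool" where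
  "stationary rename T = (\<forall>\<phi>\<in>fst T. rename (snd T \<phi>) = snd T \<phi>)"

definition rename_sys :: "('x \<Rightarrow> 'x) \<Rightarrow> 'x lsys \<Rightarrow> 'x lsys" where
  "rename_sys rename S = (\<lambda>(a, b). (a \<circ> inv rename, b)) ` S"

definition rename_pm :: "('x \<Rightarrow> 'x) \<Rightarrow> ('c, 'r, 'o, 'x) pmodel \<Rightarrow> ('c, 'r, 'o, 'x) pmodel" where
  "rename_pm rename P = P\<lparr>scope := rename_sys rename (scope P)\<rparr>"

section \<open>Query programs, their CFG and IPET\<close>

(* atoms of extend / check constraints; a literal is (polarity, atom) *)
datatype ('c, 'r, 'v) qatom = QCls 'c 'v | QRel 'r 'v 'v | QEq 'v 'v

type_synonym ('c, 'r, 'v) lit = "bool \<times> ('c, 'r, 'v) qatom"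

fun atom_fo :: "('c, 'r, 'v) qatom \<Rightarrow> ('c, 'r, 'v) fo" where
  "atom_fo (QCls c v) = FCls c v"
| "atom_fo (QRel r v w) = FRel r v w"
| "atom_fo (QEq v w) = FEq v w"

definition lit_fo :: "('c, 'r, 'v) lit \<Rightarrow> ('c, 'r, 'v) fo" where
  "lit_fo l = (if fst l then atom_fo (snd l) else FNot (atom_fo (snd l)))"

fun conj :: "('c, 'r, 'v) fo list \<Rightarrow> ('c, 'r, 'v) fo" where
  "conj [] = FTrue"
| "conj [\<phi>] = \<phi>"
| "conj (\<phi> # \<phi>s) = FAnd \<phi> (conj \<phi>s)"

record ('bb, 'n, 'c, 'r, 'v, 'x, 'm) qprog =
  bbs   :: "'bb set"
  encl  :: "'bb \<Rightarrow> ('c, 'r, 'v) lit list"         (* atoms of the for/if statements enclosing bb *)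
  hdr   :: "'bb \<Rightarrow> ('c, 'r, 'v) lit option"       (* Some a iff bb is the header of a loop with atom a *)
  cfgV  :: "'n set"
  cfgE  :: "('n \<times> 'n) set"
  cfgs  :: "'n"
  cfgt  :: "'n"
  cfgw  :: "('n \<times> 'n) \<Rightarrow> nat"
  cfgtr :: "'n \<Rightarrow> 'bb"
  evar  :: "('n \<times> 'n) \<Rightarrow> 'x"
  Sipet :: "'x lsys"
  run   :: "('c, 'r, 'm, 'x) pmodel \<Rightarrow> ('n \<times> 'n) list"   (* CFG path of the execution on a model *)
  extime :: "('c, 'r, 'm, 'x) pmodel \<Rightarrow> nat"

definition psi :: "('bb, 'n, 'c, 'r, 'v, 'x, 'm) qprog \<Rightarrow> 'bb \<Rightarrow> ('c, 'r, 'v) fo" where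
  "psi q bb = conj (map lit_fo (encl q bb))"

definition psi' :: "('bb, 'n, 'c, 'r, 'v, 'x, 'm) qprog \<Rightarrow> 'bb \<Rightarrow> ('c, 'r, 'v) lit \<Rightarrow> ('c, 'r, 'v) fo" where
  "psi' q bb a = FAnd (psi q bb) (lit_fo a)"

definition Psi :: "('bb, 'n, 'c, 'r, 'v, 'x, 'm) qprog \<Rightarrow> ('c, 'r, 'v) fo set" where
  "Psi q = psi q ` bbs q \<union> {psi' q bb a | bb a. bb \<in> bbs q \<and> hdr q bb = Some a}"

definition out_edges :: "('bb, 'n, 'c, 'r, 'v, 'x, 'm) qprog \<Rightarrow> 'bb \<Rightarrow> ('n \<times> 'n) set" where
  "out_edges q bb = {e \<in> cfgE q. cfgtr q (fst e) = bb}"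

definition g_ipet :: "('bb, 'n, 'c, 'r, 'v, 'x, 'm) qprog \<Rightarrow> ('x \<Rightarrow> int) \<Rightarrow> int" where
  "g_ipet q k = (\<Sum>e\<in>cfgE q. int (cfgw q e) * k (evar q e))"

definition is_cfg_path :: "('bb, 'n, 'c, 'r, 'v, 'x, 'm) qprog \<Rightarrow> ('n \<times> 'n) list \<Rightarrow> bool" where
  "is_cfg_path q \<pi> = (\<pi> \<noteq> [] \<and> set \<pi> \<subseteq> cfgE q \<and> fst (hd \<pi>) = cfgs q \<and> snd (last \<pi>) = cfgt q
     \<and> (\<forall>i. Suc i < length \<pi> \<longrightarrow> snd (\<pi> ! i) = fst (\<pi> ! Suc i)))"

definition exec_count :: "('bb, 'n, 'c, 'r, 'v, 'x, 'm) qprog \<Rightarrow> ('n \<times> 'n) list \<Rightarrow> 'bb \<Rightarrow> nat" where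
  "exec_count q \<pi> bb = length (filter (\<lambda>e. cfgtr q (fst e) = bb) \<pi>)"

definition block_matches :: "('bb, 'n, 'c, 'r, 'v, 'x, 'm) qprog \<Rightarrow> ('c, 'r, 'm, 'x) pmodel \<Rightarrow> 'bb \<Rightarrow> int" where
  "block_matches q N bb = int (match_count N (psi q bb))
     + (case hdr q bb of None \<Rightarrow> 0 | Some a \<Rightarrow> int (match_count N (psi' q bb a)))"

definition ipet_std :: "('bb, 'n, 'c, 'r, 'v, 'x, 'm) qprog \<Rightarrow> bool" where
  "ipet_std q = (
       eqn (ind (evar q ` {e \<in> cfgE q. fst e = cfgs q})) 1 \<subseteq> Sipet q
     \<and> eqn (ind (evar q ` {e \<in> cfgE q. snd e = cfgt q})) 1 \<subseteq> Sipet q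
     \<and> (\<forall>n\<in>cfgV q - {cfgs q, cfgt q}.
          eqn (\<lambda>x. ind (evar q ` {e \<in> cfgE q. snd e = n}) x - ind (evar q ` {e \<in> cfgE q. fst e = n}) x) 0
            \<subseteq> Sipet q)
     \<and> (\<forall>e\<in>cfgE q. ((\<lambda>x. if x = evar q e then -1 else 0), 0) \<in> Sipet q))"

(* well-formedness of the query program / CFG, IPET safety, and the block-match
   correspondence guaranteed by the structure of the generated code *)
definition query_program :: "('bb, 'n, 'c, 'r, 'v, 'x, 'm) qprog \<Rightarrow> bool" where
  "query_program q = (finite (bbs q) \<and> finite (cfgV q) \<and> cfgE q \<subseteq> cfgV q \<times> cfgV q
     \<and> cfgs q \<in> cfgV q \<and> cfgt q \<in> cfgV q \<and> cfgtr q ` cfgV q \<subseteq> bbs q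
     \<and> inj_on (evar q) (cfgE q)
     \<and> wf_sys (Sipet q) \<and> vars_sys (Sipet q) \<subseteq> evar q ` cfgE q \<and> ipet_std q
     \<and> (\<forall>M. concrete M \<longrightarrow>
          is_cfg_path q (run q M)
          \<and> (\<forall>k. (\<forall>e\<in>cfgE q. k (evar q e) = int (count_list (run q M) e)) \<longrightarrow>
                 solves k (Sipet q) \<and> int (extime q M) \<le> g_ipet q k)
          \<and> (\<forall>bb\<in>bbs q. int (exec_count q (run q M) bb) = block_matches q M bb)))"

definition S_flow :: "('bb, 'n, 'c, 'r, 'v, 'x, 'm) qprog \<Rightarrow> ('c, 'r, 'm, 'x) pmodel \<Rightarrow> 'x lsys" where
  "S_flow q N = (\<Union>bb\<in>bbs q. eqn (ind (evar q ` out_edges q bb)) (block_matches q N bb))"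

definition DS :: "('bb, 'n, 'c, 'r, 'v, 'x, 'm) qprog \<Rightarrow> ('c, 'r, 'm, 'x) pmodel \<Rightarrow> int" where
  "DS q N = Max {g_ipet q k | k. solves k (Sipet q \<union> S_flow q N)}"

definition g_witness :: "('bb, 'n, 'c, 'r, 'v, 'x, 'm) qprog \<Rightarrow> ('c, 'r, 'm, 'x) pmodel \<Rightarrow> int" where
  "g_witness q N = Max {g_ipet q k | k. solves k (scope N)}"

section \<open>Witness generation\<close>

definition fresh_ext :: "('bb, 'n, 'c, 'r, 'v, 'x, 'm) qprog \<Rightarrow> ('c, 'r, 'o, 'x) pmodel
     \<Rightarrow> ('c, 'r, 'v, 'x) fotheory \<Rightarrow> (('c, 'r, 'v) fo \<Rightarrow> 'x) \<Rightarrow> bool" where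
  "fresh_ext q P T r' = ((\<forall>\<phi>\<in>fst T. r' \<phi> = snd T \<phi>)
     \<and> inj_on r' (Psi q - fst T)
     \<and> (\<forall>\<psi>\<in>Psi q - fst T. r' \<psi> \<notin> evar q ` cfgE q \<and> r' \<psi> \<notin> snd T ` fst T
                              \<and> r' \<psi> \<notin> vars_sys (scope P)))"

definition S_merge :: "('bb, 'n, 'c, 'r, 'v, 'x, 'm) qprog \<Rightarrow> (('c, 'r, 'v) fo \<Rightarrow> 'x) \<Rightarrow> 'x lsys" where
  "S_merge q r' = (\<Union>bb\<in>bbs q.
     eqn (\<lambda>x. ind {r' (psi q bb)} x
              + (case hdr q bb of None \<Rightarrow> 0 | Some a \<Rightarrow> ind {r' (psi' q bb a)} x)
              - ind (evar q ` out_edges q bb) x) 0)"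

definition witness_model :: "('bb, 'n, 'c, 'r, 'v, 'x, 'm) qprog \<Rightarrow> (('c, 'r, 'v) fo \<Rightarrow> 'x)
     \<Rightarrow> ('c, 'r, 'o, 'x) pmodel \<Rightarrow> ('c, 'r, 'o, 'x) pmodel" where
  "witness_model q r' P = P\<lparr>scope := scope P \<union> Sipet q \<union> S_merge q r'\<rparr>"

definition witness_theory :: "('bb, 'n, 'c, 'r, 'v, 'x, 'm) qprog \<Rightarrow> ('c, 'r, 'v, 'x) fotheory
     \<Rightarrow> (('c, 'r, 'v) fo \<Rightarrow> 'x) \<Rightarrow> ('c, 'r, 'v, 'x) fotheory" where
  "witness_theory q T r' = (fst T \<union> Psi q, r')"

end

theory Submission
  imports Defs
begin

lemma lhs_supp: "finite F \<Longrightarrow> {x. a x \<noteq> 0} \<subseteq> F \<Longrightarrow> lhs a k = (\<Sum>x\<in>F. a x * k x)"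
  unfolding lhs_def by (rule sum.mono_neutral_left) auto

lemma lhs_cong: "(\<And>x. a x \<noteq> 0 \<Longrightarrow> k x = k' x) \<Longrightarrow> lhs a k = lhs a k'"
  unfolding lhs_def by (rule sum.cong) auto

lemma lhs_neg: "lhs (\<lambda>x. - a x) k = - lhs a k"
  unfolding lhs_def by (simp add: sum_negf)

lemma lhs_add:
  assumes "finite {x. a x \<noteq> 0}" "finite {x. b x \<noteq> 0}"
  shows "lhs (\<lambda>x. a x + b x) k = lhs a k + lhs b k"
proof -
  let ?F = "{x. a x \<noteq> 0} \<union> {x. b x \<noteq> 0}"
  have f: "finite ?F" using assms by simp
  have "lhs (\<lambda>x. a x + b x) k = (\<Sum>x\<in>?F. (a x + b x) * k x)"
    by (rule lhs_supp[OF f]) auto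
  also have "\<dots> = (\<Sum>x\<in>?F. a x * k x) + (\<Sum>x\<in>?F. b x * k x)"
    by (simp add: distrib_right sum.distrib)
  also have "\<dots> = lhs a k + lhs b k"
    using lhs_supp[OF f, of a k] lhs_supp[OF f, of b k] by auto
  finally show ?thesis .
qed

lemma lhs_diff:
  assumes "finite {x. a x \<noteq> 0}" "finite {x. b x \<noteq> 0}"
  shows "lhs (\<lambda>x. a x - b x) k = lhs a k - lhs b k"
proof -
  have "lhs (\<lambda>x. a x - b x) k = lhs (\<lambda>x. a x + (\<lambda>x. - b x) x) k" by simp
  also have "\<dots> = lhs a k + lhs (\<lambda>x. - b x) k"
    by (rule lhs_add) (use assms in auto)
  finally show ?thesis by (simp add: lhs_neg)
qed

lemma lhs_ind: "finite A \<Longrightarrow> lhs (ind A) k = sum k A"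
  by (subst lhs_supp[of A]) (auto simp: ind_def)

lemma finite_ind: "finite A \<Longrightarrow> finite {x. ind A x \<noteq> 0}"
  by (auto simp: ind_def)

lemma lhs_zero: "lhs (\<lambda>x. 0) k = 0"
  by (simp add: lhs_def)

lemma solves_eqn: "solves k (eqn a c) \<longleftrightarrow> lhs a k = c"
  unfolding solves_def eqn_def by (auto simp: lhs_neg)

lemma solves_Un: "solves k (A \<union> B) \<longleftrightarrow> solves k A \<and> solves k B"
  unfolding solves_def by blast

lemma solves_UN: "solves k (\<Union>i\<in>I. A i) \<longleftrightarrow> (\<forall>i\<in>I. solves k (A i))"
  unfolding solves_def by blast

lemma solves_cong: "(\<And>x. x \<in> vars_sys S \<Longrightarrow> k x = k' x) \<Longrightarrow> solves k S = solves k' S"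
  unfolding solves_def vars_sys_def
  apply (rule ball_cong[OF refl])
  apply clarsimp
  apply (subst lhs_cong[where k'=k']) apply blast+
  done

lemma solves_mono: "S2 \<subseteq> S1 \<Longrightarrow> solves k S1 \<Longrightarrow> solves k S2"
  unfolding solves_def by blast

lemma entails_sub: "S2 \<subseteq> S1 \<Longrightarrow> entails S1 S2"
  unfolding entails_def using solves_mono by blast

lemma lhs_rename:
  assumes "bij \<rho>"
  shows "lhs (a \<circ> inv \<rho>) k = lhs a (k \<circ> \<rho>)"
proof -
  have e: "{x. (a \<circ> inv \<rho>) x \<noteq> 0} = \<rho> ` {y. a y \<noteq> 0}"
    using assms by (auto simp: bij_def inv_f_f surj_f_inv_f image_iff) (metis surj_f_inv_f)
  show ?thesis unfolding lhs_def e
    using assms by (subst sum.reindex) (auto simp: bij_def inv_f_f inj_on_def)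
qed

lemma holds_scope: "holds (M\<lparr>scope := S\<rparr>) Z \<phi> = holds M Z \<phi>"
  by (induction \<phi> arbitrary: Z) auto

lemma match_count_scope: "match_count (M\<lparr>scope := S\<rparr>) \<phi> = match_count M \<phi>"
  unfolding match_count_def by (simp add: holds_scope)

lemma count_filter_sum:
  "set xs \<subseteq> E \<Longrightarrow> finite E \<Longrightarrow> (\<Sum>e\<in>{e\<in>E. P e}. count_list xs e) = length (filter P xs)"
proof (induction xs)
  case Nil then show ?case by simp
next
  case (Cons x xs)
  have "(\<Sum>e\<in>{e\<in>E. P e}. count_list (x # xs) e)
      = (\<Sum>e\<in>{e\<in>E. P e}. count_list xs e) + (\<Sum>e\<in>{e\<in>E. P e}. if x = e then 1 else 0)"
    by (simp only: sum.distrib[symmetric]) (rule sum.cong, auto)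
  also have "(\<Sum>e\<in>{e\<in>E. P e}. if x = e then 1 else 0) = (if P x then 1 else (0::nat))"
    using Cons.prems by (simp add: sum.delta)
  finally show ?case using Cons by simp
qed

lemma wf_Un: "wf_sys A \<Longrightarrow> wf_sys B \<Longrightarrow> wf_sys (A \<union> B)"
  unfolding wf_sys_def by auto

lemma wf_UN: "finite I \<Longrightarrow> (\<And>i. i \<in> I \<Longrightarrow> wf_sys (A i)) \<Longrightarrow> wf_sys (\<Union>i\<in>I. A i)"
  unfolding wf_sys_def by auto

lemma wf_eqn: "finite {x. a x \<noteq> 0} \<Longrightarrow> wf_sys (eqn a c)"
  unfolding wf_sys_def eqn_def by auto

lemma wf_rename: "bij \<rho> \<Longrightarrow> wf_sys S \<Longrightarrow> wf_sys (rename_sys \<rho> S)"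
proof -
  assume b: "bij \<rho>" and w: "wf_sys S"
  have "{x. (a \<circ> inv \<rho>) x \<noteq> 0} = \<rho> ` {y. a y \<noteq> 0}" for a :: "_ \<Rightarrow> int"
    using b by (auto simp: bij_def inv_f_f surj_f_inv_f image_iff) (metis surj_f_inv_f)
  then show ?thesis using w unfolding wf_sys_def rename_sys_def by auto
qed

lemma finite_vars: "wf_sys S \<Longrightarrow> finite (vars_sys S)"
  unfolding wf_sys_def vars_sys_def by auto


theorem lemmaA5:
  fixes q :: "('bb, 'n, 'c, 'r, 'v, 'x, 'm) qprog"
    and P :: "('c, 'r, 'o, 'x) pmodel"
    and T :: "('c, 'r, 'v, 'x) fotheory"
    and r' :: "('c, 'r, 'v) fo \<Rightarrow> 'x"
    and M :: "('c, 'r, 'm, 'x) pmodel"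
  assumes reserve: "infinite (UNIV :: 'x set)"
    and q: "query_program q"
    and P: "wf_pmodel P"
    and T: "finite (fst T)"
    and disj_r: "evar q ` cfgE q \<inter> snd T ` fst T = {}"
    and disj_P: "evar q ` cfgE q \<inter> vars_sys (scope P) = {}"
    and r': "fresh_ext q P T r'"
    and M: "M \<in> solutions P T"
  shows "\<exists>rename M'. bij rename \<and> stationary rename T
           \<and> M' \<in> solutions (witness_model q r' P) (witness_theory q T r')
           \<and> refines (rename_pm rename M) M'
           \<and> DS q M = DS q M' \<and> DS q M' = g_witness q M'"
proof -
  have Mc: "concrete M" and MP: "refines P M" and Mcomp: "compatible M T"
    using M by (auto simp: solutions_def)
  obtain ab where ab: "refines_via P ab M" using MP by (auto simp: refines_def)
  obtain k0 where k0: "solves k0 (scope M)" using Mc by (auto simp: concrete_def)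
  have wfM: "wf_sys (scope M)" using Mc by (auto simp: concrete_def wf_pmodel_def)
  have wfP: "wf_sys (scope P)" using P by (auto simp: wf_pmodel_def)
  have qbbs: "finite (bbs q)" and qV: "finite (cfgV q)" and qE: "cfgE q \<subseteq> cfgV q \<times> cfgV q"
    and qtr: "cfgtr q ` cfgV q \<subseteq> bbs q" and qinj: "inj_on (evar q) (cfgE q)"
    and qwf: "wf_sys (Sipet q)" and qvars: "vars_sys (Sipet q) \<subseteq> evar q ` cfgE q"
    and qrun: "\<And>M. concrete M \<Longrightarrow> is_cfg_path q (run q M)
          \<and> (\<forall>k. (\<forall>e\<in>cfgE q. k (evar q e) = int (count_list (run q M) e)) \<longrightarrow>
                 solves k (Sipet q) \<and> int (extime q M) \<le> g_ipet q k)
          \<and> (\<forall>bb\<in>bbs q. int (exec_count q (run q M) bb) = block_matches q M bb)"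
    using q unfolding query_program_def by blast+
  have finE: "finite (cfgE q)" using qE qV by (meson finite_SigmaI finite_subset)
  have r'T: "\<And>\<phi>. \<phi> \<in> fst T \<Longrightarrow> r' \<phi> = snd T \<phi>"
    and r'inj: "inj_on r' (Psi q - fst T)"
    and r'fresh: "\<And>\<psi>. \<psi> \<in> Psi q - fst T \<Longrightarrow> r' \<psi> \<notin> evar q ` cfgE q \<and> r' \<psi> \<notin> snd T ` fst T
                              \<and> r' \<psi> \<notin> vars_sys (scope P)"
    using r' unfolding fresh_ext_def by blast+
  have finPsi: "finite (Psi q)"
  proof -
    have "{psi' q bb a | bb a. bb \<in> bbs q \<and> hdr q bb = Some a}
          \<subseteq> (\<lambda>bb. psi' q bb (the (hdr q bb))) ` bbs q" by force
    then show ?thesis unfolding Psi_def using qbbs by (meson finite_Un finite_imageI finite_subset)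
  qed
  define EV where "EV = evar q ` cfgE q"
  define RV where "RV = r' ` (Psi q - fst T)"
  define VM where "VM = vars_sys (scope M)"
  define VP where "VP = vars_sys (scope P)"
  define VT where "VT = snd T ` fst T"
  have fEV: "finite EV" using finE EV_def by simp
  have fRV: "finite RV" using finPsi RV_def by simp
  have fVM: "finite VM" using wfM finite_vars VM_def by blast
  have fVP: "finite VP" using wfP finite_vars VP_def by blast
  have fVT: "finite VT" using T VT_def by simp
  define B where "B = VM \<inter> (EV \<union> RV)"
  define F where "F = VM \<union> VP \<union> VT \<union> EV \<union> RV"
  have fB: "finite B" using fVM B_def by simp
  have fF: "finite F" using fVM fVP fVT fEV fRV F_def by simp
  have "infinite (UNIV - F)" using reserve fF by (simp add: Diff_infinite_finite)
  then obtain C where fC: "finite C" and cC: "card C = card B" and CF: "C \<subseteq> UNIV - F"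
    using infinite_arbitrarily_large by blast
  obtain h where h: "bij_betw h B C" using finite_same_card_bij[OF fB fC] cC by metis
  have BF: "B \<subseteq> F" unfolding B_def F_def by blast
  have BC: "B \<inter> C = {}" using BF CF by blast
  define \<rho> where "\<rho> x = (if x \<in> B then h x else if x \<in> C then inv_into B h x else x)" for x
  have invol: "\<rho> (\<rho> x) = x" for x
  proof (cases "x \<in> B")
    case True
    then have "h x \<in> C" using h bij_betwE by blast
    then show ?thesis using True BC h by (auto simp: \<rho>_def bij_betw_inv_into_left)
  next
    case False
    show ?thesis
    proof (cases "x \<in> C")
      case True
      then have "inv_into B h x \<in> B" using h by (meson bij_betwE bij_betw_inv_into)
      then show ?thesis using True False h by (auto simp: \<rho>_def bij_betw_inv_into_right)
    qed (use False in \<open>simp add: \<rho>_def\<close>)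
  qed
  have comp: "\<rho> \<circ> \<rho> = id" using invol by auto
  have bij: "bij \<rho>" using o_bij[OF comp comp] .
  have inv\<rho>: "inv \<rho> = \<rho>" using inv_unique_comp[OF comp comp] .
  have fixPT: "\<rho> x = x" if "x \<in> VP \<union> VT" for x
  proof -
    have "x \<notin> EV" using that disj_P disj_r EV_def VP_def VT_def by blast
    moreover have "x \<notin> RV" using that r'fresh unfolding RV_def VP_def VT_def by blast
    ultimately have "x \<notin> B" "x \<notin> C" using that CF unfolding B_def F_def by auto
    then show ?thesis by (simp add: \<rho>_def)
  qed
  have moveM: "\<rho> y \<notin> EV \<union> RV" if "y \<in> VM" for y
  proof (cases "y \<in> B")
    case True
    then have "h y \<in> C" using h bij_betwE by blast
    then show ?thesis using True CF unfolding \<rho>_def F_def by auto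
  next
    case False
    then have "y \<notin> C" using that CF F_def by auto
    then show ?thesis using False that unfolding \<rho>_def B_def by auto
  qed
  have stat: "stationary \<rho> T" unfolding stationary_def using fixPT VT_def by blast

  define kb where "kb k x = (if x \<in> EV then k x else if x \<in> RV
      then int (match_count M (inv_into (Psi q - fst T) r' x)) else k0 (\<rho> x))" for k x
  define Eq where "Eq = (\<Union>\<phi>\<in>fst T \<union> Psi q. eqn (ind {r' \<phi>}) (int (match_count M \<phi>)))"
  define S' where "S' = rename_sys \<rho> (scope M) \<union> scope P \<union> Sipet q \<union> S_merge q r' \<union> S_flow q M \<union> Eq"
  define M' where "M' = M\<lparr>scope := S'\<rparr>"

  have kbr: "kb k (r' \<phi>) = int (match_count M \<phi>)" if "\<phi> \<in> fst T \<union> Psi q" for k \<phi>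
  proof (cases "\<phi> \<in> fst T")
    case True
    then have e: "r' \<phi> = snd T \<phi>" using r'T by blast
    have nE: "snd T \<phi> \<notin> EV" using True disj_r EV_def by blast
    have nR: "snd T \<phi> \<notin> RV" using True r'fresh RV_def by (metis (no_types, lifting) image_eqI imageE)
    have fx: "\<rho> (snd T \<phi>) = snd T \<phi>" using fixPT True VT_def by blast
    have "entails (scope M) (eqn (ind {snd T \<phi>}) (int (match_count M \<phi>)))"
      using Mcomp True unfolding compatible_def by blast
    then have "solves k0 (eqn (ind {snd T \<phi>}) (int (match_count M \<phi>)))"
      using k0 entails_def by blast
    then have "k0 (snd T \<phi>) = int (match_count M \<phi>)" by (simp add: solves_eqn lhs_ind)
    then show ?thesis using e nE nR fx by (simp add: kb_def)
  next
    case False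
    then have m: "\<phi> \<in> Psi q - fst T" using that by blast
    then have "r' \<phi> \<notin> EV" "r' \<phi> \<in> RV" using r'fresh EV_def RV_def by auto
    then show ?thesis using m r'inj by (simp add: kb_def inv_into_f_f)
  qed

  have key: "solves (kb k) S'" if ks: "solves k (Sipet q \<union> S_flow q M)" for k
  proof -
    have kEV: "kb k x = k x" if "x \<in> EV" for x using that by (simp add: kb_def)
    have s1: "solves (kb k) (rename_sys \<rho> (scope M))"
      unfolding solves_def rename_sys_def
    proof clarify
      fix a b assume ab: "(a, b) \<in> scope M"
      have "lhs (a \<circ> inv \<rho>) (kb k) = lhs a (kb k \<circ> \<rho>)" by (rule lhs_rename[OF bij])
      also have "\<dots> = lhs a k0"
      proof (rule lhs_cong)
        fix x assume "a x \<noteq> 0"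
        then have "x \<in> VM" using ab VM_def vars_sys_def by fastforce
        then show "(kb k \<circ> \<rho>) x = k0 x" using moveM invol by (simp add: kb_def)
      qed
      also have "\<dots> \<le> b" using k0 ab solves_def by fastforce
      finally show "lhs (a \<circ> inv \<rho>) (kb k) \<le> b" .
    qed
    have s2: "solves (kb k) (scope P)"
    proof -
      have "entails (scope M) (scope P)" using ab refines_via_def by blast
      then have "solves k0 (scope P)" using k0 entails_def by blast
      moreover have "kb k x = k0 x" if "x \<in> vars_sys (scope P)" for x
      proof -
        have "x \<notin> EV" using that disj_P EV_def by blast
        moreover have "x \<notin> RV" using that r'fresh RV_def by blast
        ultimately show ?thesis using fixPT that VP_def by (simp add: kb_def)
      qed
      ultimately show ?thesis using solves_cong by blast
    qed
    have s3: "solves (kb k) (Sipet q)"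
    proof -
      have "solves k (Sipet q)" using ks solves_Un by blast
      moreover have "kb k x = k x" if "x \<in> vars_sys (Sipet q)" for x
        using that qvars kEV EV_def by blast
      ultimately show ?thesis using solves_cong by blast
    qed
    have outE: "evar q ` out_edges q bb \<subseteq> EV" for bb unfolding out_edges_def EV_def by auto
    have fout: "finite (evar q ` out_edges q bb)" for bb using outE fEV finite_subset by blast
    have flow: "sum k (evar q ` out_edges q bb) = block_matches q M bb" if "bb \<in> bbs q" for bb
    proof -
      have "solves k (S_flow q M)" using ks solves_Un by blast
      then have "solves k (eqn (ind (evar q ` out_edges q bb)) (block_matches q M bb))"
        using that unfolding S_flow_def solves_UN by blast
      then show ?thesis by (simp add: solves_eqn lhs_ind fout)
    qed
    have sumeq: "sum (kb k) (evar q ` out_edges q bb) = sum k (evar q ` out_edges q bb)" for bb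
      by (rule sum.cong) (use outE kEV in auto)
    have s4: "solves (kb k) (S_flow q M)"
      unfolding S_flow_def solves_UN
      by (auto simp: solves_eqn lhs_ind fout sumeq flow)
    have s5: "solves (kb k) (S_merge q r')"
      unfolding S_merge_def solves_UN
    proof
      fix bb assume bb: "bb \<in> bbs q"
      have p1: "psi q bb \<in> fst T \<union> Psi q" using bb by (auto simp: Psi_def)
      show "solves (kb k) (eqn (\<lambda>x. ind {r' (psi q bb)} x
              + (case hdr q bb of None \<Rightarrow> 0 | Some a \<Rightarrow> ind {r' (psi' q bb a)} x)
              - ind (evar q ` out_edges q bb) x) 0)"
      proof (cases "hdr q bb")
        case None
        have "lhs (\<lambda>x. ind {r' (psi q bb)} x + 0 - ind (evar q ` out_edges q bb) x) (kb k)
              = lhs (\<lambda>x. ind {r' (psi q bb)} x - ind (evar q ` out_edges q bb) x) (kb k)" by simp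
        also have "\<dots> = kb k (r' (psi q bb)) - sum (kb k) (evar q ` out_edges q bb)"
          by (subst lhs_diff) (auto simp: finite_ind fout lhs_ind)
        also have "\<dots> = 0" using kbr[OF p1] sumeq flow[OF bb] None by (simp add: block_matches_def)
        finally show ?thesis using None by (simp add: solves_eqn)
      next
        case (Some a)
        have p2: "psi' q bb a \<in> fst T \<union> Psi q" using bb Some unfolding Psi_def by blast
        have "lhs (\<lambda>x. ind {r' (psi q bb)} x + ind {r' (psi' q bb a)} x - ind (evar q ` out_edges q bb) x) (kb k)
              = lhs (\<lambda>x. ind {r' (psi q bb)} x + ind {r' (psi' q bb a)} x) (kb k)
                - sum (kb k) (evar q ` out_edges q bb)"
        proof -
          have "{x. ind {r' (psi q bb)} x + ind {r' (psi' q bb a)} x \<noteq> 0} \<subseteq> {r' (psi q bb), r' (psi' q bb a)}"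
            by (auto simp: ind_def)
          then have "finite {x. ind {r' (psi q bb)} x + ind {r' (psi' q bb a)} x \<noteq> 0}"
            using finite_subset by blast
          then show ?thesis by (subst lhs_diff) (auto simp: finite_ind fout lhs_ind)
        qed
        also have "\<dots> = kb k (r' (psi q bb)) + kb k (r' (psi' q bb a)) - sum (kb k) (evar q ` out_edges q bb)"
          by (subst lhs_add) (auto simp: finite_ind lhs_ind)
        also have "\<dots> = 0" using kbr[OF p1] kbr[OF p2] sumeq flow[OF bb] Some by (simp add: block_matches_def)
        finally show ?thesis using Some by (simp add: solves_eqn)
      qed
    qed
    have s6: "solves (kb k) Eq"
      unfolding Eq_def solves_UN by (auto simp: solves_eqn lhs_ind kbr)
    show ?thesis unfolding S'_def solves_Un using s1 s2 s3 s4 s5 s6 by blast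
  qed

  have runM: "is_cfg_path q (run q M)
          \<and> (\<forall>k. (\<forall>e\<in>cfgE q. k (evar q e) = int (count_list (run q M) e)) \<longrightarrow>
                 solves k (Sipet q) \<and> int (extime q M) \<le> g_ipet q k)
          \<and> (\<forall>bb\<in>bbs q. int (exec_count q (run q M) bb) = block_matches q M bb)"
    using qrun[OF Mc] .
  define kr where "kr x = int (count_list (run q M) (inv_into (cfgE q) (evar q) x))" for x
  have kre: "kr (evar q e) = int (count_list (run q M) e)" if "e \<in> cfgE q" for e
    using that qinj by (simp add: kr_def inv_into_f_f)
  have kr1: "solves kr (Sipet q)" using runM kre by blast
  have setrun: "set (run q M) \<subseteq> cfgE q" using runM by (simp add: is_cfg_path_def)
  have kr2: "solves kr (S_flow q M)"
    unfolding S_flow_def solves_UN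
  proof
    fix bb assume bb: "bb \<in> bbs q"
    have oe: "out_edges q bb \<subseteq> cfgE q" by (auto simp: out_edges_def)
    have fo: "finite (out_edges q bb)" using oe finE finite_subset by blast
    have "lhs (ind (evar q ` out_edges q bb)) kr = sum kr (evar q ` out_edges q bb)"
      using fo by (simp add: lhs_ind)
    also have "\<dots> = (\<Sum>e\<in>out_edges q bb. kr (evar q e))"
      using qinj oe by (subst sum.reindex) (auto intro: inj_on_subset)
    also have "\<dots> = (\<Sum>e\<in>out_edges q bb. int (count_list (run q M) e))"
      using oe kre by (intro sum.cong) auto
    also have "\<dots> = int (\<Sum>e\<in>out_edges q bb. count_list (run q M) e)" by simp
    also have "(\<Sum>e\<in>out_edges q bb. count_list (run q M) e) = exec_count q (run q M) bb"
      unfolding out_edges_def exec_count_def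
      by (rule count_filter_sum[OF setrun finE])
    also have "int (exec_count q (run q M) bb) = block_matches q M bb" using runM bb by blast
    finally show "solves kr (eqn (ind (evar q ` out_edges q bb)) (block_matches q M bb))"
      by (simp add: solves_eqn)
  qed
  have solS': "solves (kb kr) S'" using key kr1 kr2 solves_Un by blast
  have mc: "match_count M' \<phi> = match_count M \<phi>" for \<phi>
    unfolding M'_def by (rule match_count_scope)
  have bm: "block_matches q M' = block_matches q M"
    by (rule ext) (simp add: block_matches_def mc split: option.splits)
  have SflowEq: "S_flow q M' = S_flow q M" by (simp add: S_flow_def bm)
  have wfS': "wf_sys S'"
  proof -
    have w1: "wf_sys (rename_sys \<rho> (scope M))" using wf_rename[OF bij wfM] .
    have w4: "wf_sys (S_merge q r')" unfolding S_merge_def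
    proof (rule wf_UN[OF qbbs])
      fix bb assume "bb \<in> bbs q"
      have fo: "finite (evar q ` out_edges q bb)"
        using finE by (auto simp: out_edges_def)
      have "{x. ind {r' (psi q bb)} x
              + (case hdr q bb of None \<Rightarrow> 0 | Some a \<Rightarrow> ind {r' (psi' q bb a)} x)
              - ind (evar q ` out_edges q bb) x \<noteq> 0}
            \<subseteq> {r' (psi q bb)} \<union> (case hdr q bb of None \<Rightarrow> {} | Some a \<Rightarrow> {r' (psi' q bb a)})
               \<union> evar q ` out_edges q bb"
        by (auto simp: ind_def split: option.splits if_splits)
      moreover have "finite ({r' (psi q bb)} \<union> (case hdr q bb of None \<Rightarrow> {} | Some a \<Rightarrow> {r' (psi' q bb a)})
               \<union> evar q ` out_edges q bb)" using fo by (auto split: option.splits)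
      ultimately show "wf_sys (eqn (\<lambda>x. ind {r' (psi q bb)} x
              + (case hdr q bb of None \<Rightarrow> 0 | Some a \<Rightarrow> ind {r' (psi' q bb a)} x)
              - ind (evar q ` out_edges q bb) x) 0)"
        by (intro wf_eqn) (rule finite_subset)
    qed
    have w5: "wf_sys (S_flow q M)" unfolding S_flow_def
      by (rule wf_UN[OF qbbs], rule wf_eqn, rule finite_ind) (use finE in \<open>auto simp: out_edges_def\<close>)
    have w6: "wf_sys Eq" unfolding Eq_def
      by (rule wf_UN) (auto intro!: wf_eqn finite_ind simp: T finPsi)
    show ?thesis unfolding S'_def using w1 wfP qwf w4 w5 w6 by (intro wf_Un)
  qed
  have concM': "concrete M'"
    using Mc wfS' solS' unfolding concrete_def M'_def wf_pmodel_def by auto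
  have ref1: "refines (witness_model q r' P) M'"
    unfolding refines_def
  proof (rule exI[of _ ab])
    have "entails S' (scope P \<union> Sipet q \<union> S_merge q r')"
      by (rule entails_sub) (auto simp: S'_def)
    then show "refines_via (witness_model q r' P) ab M'"
      using ab unfolding refines_via_def witness_model_def M'_def by simp
  qed
  have comp': "compatible M' (witness_theory q T r')"
    unfolding compatible_def witness_theory_def
  proof (simp only: fst_conv snd_conv, intro ballI)
    fix \<phi> assume "\<phi> \<in> fst T \<union> Psi q"
    then have "eqn (ind {r' \<phi>}) (int (match_count M \<phi>)) \<subseteq> scope M'"
      unfolding M'_def S'_def Eq_def by auto
    then have "eqn (ind {r' \<phi>}) (int (match_count M' \<phi>)) \<subseteq> scope M'"
      by (simp only: mc)
    then show "entails (scope M') (eqn (ind {r' \<phi>}) (int (match_count M' \<phi>)))"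
      by (rule entails_sub)
  qed
  have sol: "M' \<in> solutions (witness_model q r' P) (witness_theory q T r')"
    using concM' ref1 comp' by (simp add: solutions_def)
  have ref2: "refines (rename_pm \<rho> M) M'"
    unfolding refines_def
  proof (rule exI[of _ id])
    have "entails S' (rename_sys \<rho> (scope M))"
      by (rule entails_sub) (auto simp: S'_def)
    then show "refines_via (rename_pm \<rho> M) id M'"
      unfolding refines_via_def rename_pm_def M'_def by auto
  qed
  have gcong: "g_ipet q (kb k) = g_ipet q k" for k
    unfolding g_ipet_def by (rule sum.cong) (auto simp: kb_def EV_def)
  have seteq: "{g_ipet q k | k. solves k (Sipet q \<union> S_flow q M')} = {g_ipet q k | k. solves k (scope M')}"
  proof
    show "{g_ipet q k | k. solves k (Sipet q \<union> S_flow q M')} \<subseteq> {g_ipet q k | k. solves k (scope M')}"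
    proof clarify
      fix k assume "solves k (Sipet q \<union> S_flow q M')"
      then have "solves (kb k) (scope M')" using key SflowEq by (simp add: M'_def)
      then show "\<exists>k'. g_ipet q k = g_ipet q k' \<and> solves k' (scope M')" using gcong by metis
    qed
  next
    show "{g_ipet q k | k. solves k (scope M')} \<subseteq> {g_ipet q k | k. solves k (Sipet q \<union> S_flow q M')}"
    proof clarify
      fix k assume "solves k (scope M')"
      then have "solves k (Sipet q \<union> S_flow q M')"
        by (rule solves_mono[rotated]) (unfold SflowEq, auto simp: M'_def S'_def)
      then show "\<exists>k'. g_ipet q k = g_ipet q k' \<and> solves k' (Sipet q \<union> S_flow q M')" by blast
    qed
  qed
  have ds1: "DS q M = DS q M'" by (simp add: DS_def SflowEq)
  have ds2: "DS q M' = g_witness q M'" unfolding DS_def g_witness_def seteq ..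
  show ?thesis using bij stat sol ref2 ds1 ds2 by blast
qed
end
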